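(* Let $d\ge2$, suppose $\mathcal D\subseteq\mathbb S_1^{d-1}$ has non-empty interior and $\mathcal C\subset\Gamma\backslash G\times(0,1)$ is compact. Then: (i) there exists $\kappa(\mathcal C)>0$ such that $F_{\mathcal D}(M,t)<\kappa(\mathcal C)$ whenever $(\Gamma M,t)\in\mathcal C$; and (ii) $F_{\mathcal D}$ is continuous at every point $(\Gamma M,t)\in\mathcal C$ satisfying $$(\mathbb Z^{d+1}M\setminus\{0\})\cap\partial\big((-t,1-t)\times(0,\kappa(\mathcal C)]\mathcal D\big)=\emptyset.$$
   Context: $G=\mathrm{SL}(d+1,\mathbb R)$, $\Gamma=\mathrm{SL}(d+1,\mathbb Z)$, $\Gamma\backslash G$ with the quotient topology. Row vectors in $\mathbb R^{d+1}$ are written $(u,\vec v)$, $u\in\mathbb R$, $\vec v\in\mathbb R^d$; $\mathbb Z^{d+1}M=\{\vec mM:\vec m\in\mathbb Z^{d+1}\}$. For $t\in(0,1)$, $\mathcal Q_{\mathcal D}(M,t)=\{(u,\vec v)\in\mathbb Z^{d+1}M:-t<u<1-t,\ \vec v\in\mathbb R_{>0}\mathcal D\}$ and $F_{\mathcal D}(M,t)=\min\{|\vec v|:(u,\vec v)\in\mathcal Q_{\mathcal D}(M,t)\}$; this is a well-defined positive function on $\Gamma\backslash G\times(0,1)$. For $r>0$, $(0,r]\mathcal D=\{s\vec x: 0<s\le r,\ \vec x\in\mathcal D\}$; $\partial$ denotes topological boundary in $\mathbb R^{d+1}$. *)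

theory Defs
  imports "HOL-Analysis.Analysis"
begin

text \<open>The dimension d is CARD('d) for a finite type 'd. Vectors of
R^(d+1) are indexed by 'd option: the coordinate None is u, and the coordinates
Some i form the vector v in R^d = real^'d. Matrices act on row vectors: w v* M.\<close>

type_synonym 'd vecd1 = "real ^ ('d option)"
type_synonym 'd matd1 = "real ^ ('d option) ^ ('d option)"

definition ucomp :: "'d::finite vecd1 \<Rightarrow> real" where
  "ucomp w = w $ None"

definition vcomp :: "'d::finite vecd1 \<Rightarrow> real ^ 'd" where
  "vcomp w = (\<chi> i. w $ Some i)"

definition SLR :: "'d::finite matd1 set" where
  "SLR = {M. det M = 1}"

definition SLZ :: "'d::finite matd1 set" where
  "SLZ = {M. det M = 1 \<and> (\<forall>i j. M $ i $ j \<in> \<int>)}"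

definition coset :: "'d::finite matd1 \<Rightarrow> 'd matd1 set" where
  "coset M = (\<lambda>\<gamma>. \<gamma> ** M) ` SLZ"

definition quot_top :: "'a topology \<Rightarrow> ('a \<Rightarrow> 'b) \<Rightarrow> 'b topology" where
  "quot_top X f = topology (\<lambda>U. U \<subseteq> f ` topspace X \<and> openin X {x \<in> topspace X. f x \<in> U})"

lemma istopology_quot_top:
  "istopology (\<lambda>U. U \<subseteq> f ` topspace X \<and> openin X {x \<in> topspace X. f x \<in> U})"
proof -
  have i: "{x \<in> topspace X. f x \<in> S \<inter> T} = {x \<in> topspace X. f x \<in> S} \<inter> {x \<in> topspace X. f x \<in> T}"
    for S T by auto
  have u: "{x \<in> topspace X. f x \<in> \<Union>K} = (\<Union>S\<in>K. {x \<in> topspace X. f x \<in> S})" for K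
    by auto
  show ?thesis unfolding istopology_def i u
    by (auto intro!: openin_Union)
qed

lemma openin_quot_top:
  "openin (quot_top X f) U \<longleftrightarrow> U \<subseteq> f ` topspace X \<and> openin X {x \<in> topspace X. f x \<in> U}"
  unfolding quot_top_def by (simp add: topology_inverse'[OF istopology_quot_top])

definition GammaG_top :: "'d::finite matd1 set topology" where
  "GammaG_top = quot_top (top_of_set SLR) coset"

definition lattice :: "'d::finite matd1 \<Rightarrow> 'd vecd1 set" where
  "lattice M = {m v* M | m. \<forall>i. m $ i \<in> \<int>}"

definition cone :: "(real ^ 'd) set \<Rightarrow> (real ^ 'd) set" where
  "cone D = {s *\<^sub>R x | s x. 0 < s \<and> x \<in> D}"

definition trunc_cone :: "real \<Rightarrow> (real ^ 'd) set \<Rightarrow> (real ^ 'd) set" where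
  "trunc_cone r D = {s *\<^sub>R x | s x. 0 < s \<and> s \<le> r \<and> x \<in> D}"

definition QD :: "(real ^ 'd) set \<Rightarrow> 'd::finite matd1 \<Rightarrow> real \<Rightarrow> 'd vecd1 set" where
  "QD D M t = {w \<in> lattice M. - t < ucomp w \<and> ucomp w < 1 - t \<and> vcomp w \<in> cone D}"

text \<open>F_D(M,t): the minimum (here written as infimum) of |v| over Q_D(M,t).\<close>
definition FD :: "(real ^ 'd) set \<Rightarrow> 'd::finite matd1 \<Rightarrow> real \<Rightarrow> real" where
  "FD D M t = Inf {norm (vcomp w) | w. w \<in> QD D M t}"

definition FDq :: "(real ^ 'd) set \<Rightarrow> 'd::finite matd1 set \<times> real \<Rightarrow> real" where
  "FDq D p = FD D (SOME M. M \<in> SLR \<and> coset M = fst p) (snd p)"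

definition region :: "(real ^ 'd) set \<Rightarrow> real \<Rightarrow> real \<Rightarrow> 'd::finite vecd1 set" where
  "region D t r = {w. - t < ucomp w \<and> ucomp w < 1 - t \<and> vcomp w \<in> trunc_cone r D}"

end

theory Submission
  imports Defs "HOL-Library.FuncSet"
begin


lemma cont_vm[continuous_intros]:
  fixes f :: "'a::topological_space \<Rightarrow> real^'n::finite^'m::finite"
  shows "continuous_on S f \<Longrightarrow> continuous_on S (\<lambda>x. m v* f x)"
  unfolding vector_matrix_mult_def
  by (intro continuous_intros)

lemma cont_ucomp[continuous_intros]:
  "continuous_on S f \<Longrightarrow> continuous_on S (\<lambda>x. ucomp (f x))"
  unfolding ucomp_def by (intro continuous_intros)

lemma cont_vcomp[continuous_intros]:
  "continuous_on S f \<Longrightarrow> continuous_on S (\<lambda>x. vcomp (f x))"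
  unfolding vcomp_def by (intro continuous_intros)

lemma vcomp_add[simp]: "vcomp (a + b) = vcomp a + vcomp b"
  and vcomp_diff[simp]: "vcomp (a - b) = vcomp a - vcomp b"
  and vcomp_scale[simp]: "vcomp (c *\<^sub>R a) = c *\<^sub>R vcomp a"
  and vcomp_zero[simp]: "vcomp 0 = 0"
  by (simp_all add: vcomp_def vec_eq_iff)

lemma ucomp_add[simp]: "ucomp (a + b) = ucomp a + ucomp b"
  and ucomp_diff[simp]: "ucomp (a - b) = ucomp a - ucomp b"
  and ucomp_scale[simp]: "ucomp (c *\<^sub>R a) = c * ucomp a"
  and ucomp_zero[simp]: "ucomp 0 = 0"
  by (simp_all add: ucomp_def)

lemma norm_ucomp: "\<bar>ucomp w\<bar> \<le> norm w"
  unfolding ucomp_def by (rule component_le_norm_cart)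

lemma norm_sq_split: "(norm (w::'d::finite vecd1))^2 = (ucomp w)^2 + (norm (vcomp w))^2"
proof -
  have U: "(UNIV :: 'd option set) = insert None (Some ` UNIV)"
    by (auto intro: option.exhaust)
  have "(norm w)^2 = (\<Sum>i\<in>UNIV. (w$i)^2)"
    by (simp add: norm_vec_def L2_set_def real_sqrt_pow2 sum_nonneg)
  also have "\<dots> = (w$None)^2 + (\<Sum>i\<in>Some ` UNIV. (w$i)^2)"
    by (subst U, rule sum.insert) auto
  also have "(\<Sum>i\<in>Some ` UNIV. (w$i)^2) = (\<Sum>j\<in>UNIV. (w$Some j)^2)"
    by (subst sum.reindex) (auto simp: inj_on_def)
  also have "\<dots> = (norm (vcomp w))^2"
    by (simp add: norm_vec_def L2_set_def real_sqrt_pow2 sum_nonneg vcomp_def)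
  finally show ?thesis by (simp add: ucomp_def)
qed

lemma norm_vcomp: "norm (vcomp w) \<le> norm w"
proof -
  have "(norm (vcomp w))^2 \<le> (norm w)^2" unfolding norm_sq_split[of w] by simp
  thus ?thesis by (rule power2_le_imp_le) simp
qed

lemma norm_split_le: "norm w \<le> \<bar>ucomp w\<bar> + norm (vcomp w)"
proof -
  have "(norm w)^2 \<le> (\<bar>ucomp w\<bar> + norm (vcomp w))^2"
    unfolding norm_sq_split by (simp add: power2_sum)
  thus ?thesis by (rule power2_le_imp_le) simp
qed



lemma SLR_inv: "M \<in> SLR \<Longrightarrow> \<exists>B. B ** M = mat 1 \<and> M ** B = mat 1"
  unfolding SLR_def using invertible_det_nz[of M] invertible_def by auto

lemma SLZ_one: "mat 1 \<in> SLZ"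
proof -
  have "\<forall>i j. (mat 1 :: real^'n^'n) $ i $ j \<in> \<int>" by (simp add: mat_def)
  then show ?thesis unfolding SLZ_def by simp
qed

lemma SLZ_mult: "A \<in> SLZ \<Longrightarrow> B \<in> SLZ \<Longrightarrow> A ** B \<in> SLZ"
proof -
  assume a: "A \<in> SLZ" "B \<in> SLZ"
  have "det (A ** B) = 1" using a unfolding SLZ_def by (simp add: det_mul)
  moreover have "\<forall>i j. (A ** B) $ i $ j \<in> \<int>" using a unfolding SLZ_def
    by (auto simp: matrix_matrix_mult_def intro!: Ints_sum Ints_mult)
  ultimately show ?thesis unfolding SLZ_def by simp
qed

lemma SLZ_SLR_mult: "A \<in> SLZ \<Longrightarrow> B \<in> SLR \<Longrightarrow> A ** B \<in> SLR"
  unfolding SLZ_def SLR_def by (auto simp: det_mul)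

lemma mem_coset_self: "M \<in> coset M"
  unfolding coset_def using SLZ_one by (metis image_eqI matrix_mul_lid)

lemma coset_sub: "\<gamma> \<in> SLZ \<Longrightarrow> coset (\<gamma> ** M) \<subseteq> coset M"
  unfolding coset_def by (auto simp: matrix_mul_assoc intro!: image_eqI SLZ_mult)

lemma coset_eqD: "coset A = coset B \<Longrightarrow> \<exists>\<gamma>\<in>SLZ. A = \<gamma> ** B"
  using mem_coset_self[of A] unfolding coset_def by auto

lemma lattice_sub: "\<gamma> \<in> SLZ \<Longrightarrow> lattice (\<gamma> ** M) \<subseteq> lattice M"
proof
  fix w assume g: "\<gamma> \<in> SLZ" and "w \<in> lattice (\<gamma> ** M)"
  then obtain m where m: "\<forall>i. m $ i \<in> \<int>" "w = m v* (\<gamma> ** M)" unfolding lattice_def by auto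
  have "w = (m v* \<gamma>) v* M" using m by (simp add: vector_matrix_mul_assoc)
  moreover have "\<forall>i. (m v* \<gamma>) $ i \<in> \<int>" using m g unfolding SLZ_def
    by (auto simp: vector_matrix_mult_def intro!: Ints_sum Ints_mult)
  ultimately show "w \<in> lattice M" unfolding lattice_def by blast
qed

lemma lattice_coset: "coset A = coset B \<Longrightarrow> lattice A = lattice B"
  by (metis coset_eqD lattice_sub subset_antisym)

lemma FD_lattice: "lattice A = lattice B \<Longrightarrow> FD D A t = FD D B t"
  unfolding FD_def QD_def by simp

lemma FDq_coset: "M \<in> SLR \<Longrightarrow> FDq D (coset M, t) = FD D M t"
proof -
  assume M: "M \<in> SLR"
  let ?M = "SOME M'. M' \<in> SLR \<and> coset M' = coset M"
  have "?M \<in> SLR \<and> coset ?M = coset M" by (rule someI[of _ M]) (use M in auto)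
  then have "lattice ?M = lattice M" using lattice_coset by blast
  then have "FD D ?M t = FD D M t" by (rule FD_lattice)
  then show ?thesis unfolding FDq_def by simp
qed

lemma cont_mm[continuous_intros]:
  fixes f :: "'a::topological_space \<Rightarrow> real^'n::finite^'m::finite"
  shows "continuous_on S f \<Longrightarrow> continuous_on S (\<lambda>x. G ** f x)"
  unfolding matrix_matrix_mult_def
  by (intro continuous_intros)

lemma topspace_GammaG: "topspace GammaG_top = coset ` SLR"
proof -
  have e: "{x \<in> SLR. coset x \<in> coset ` SLR} = SLR" by auto
  have "openin GammaG_top (coset ` SLR)"
    unfolding GammaG_top_def openin_quot_top by (simp add: e)
  then have "coset ` SLR \<subseteq> topspace GammaG_top" by (rule openin_subset)
  moreover have "topspace GammaG_top \<subseteq> coset ` SLR"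
    using openin_topspace[of GammaG_top] unfolding GammaG_top_def openin_quot_top by auto
  ultimately show ?thesis by blast
qed

lemma open_coset_image:
  assumes A: "open A"
  shows "openin GammaG_top (coset ` (SLR \<inter> A))"
  unfolding GammaG_top_def openin_quot_top
proof (intro conjI)
  show "coset ` (SLR \<inter> A) \<subseteq> coset ` topspace (top_of_set SLR)" by auto
  let ?P = "{x \<in> topspace (top_of_set SLR). coset x \<in> coset ` (SLR \<inter> A)}"
  show "openin (top_of_set SLR) ?P"
  proof (subst openin_subopen, intro ballI)
    fix x assume "x \<in> ?P"
    then obtain M1 where x: "x \<in> SLR" and M1: "M1 \<in> SLR" "M1 \<in> A" "coset x = coset M1" by auto
    obtain \<gamma> where g: "\<gamma> \<in> SLZ" "x = \<gamma> ** M1" using coset_eqD[OF M1(3)] by auto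
    obtain \<gamma>' where g': "\<gamma>' \<in> SLZ" "M1 = \<gamma>' ** x" using coset_eqD[OF M1(3)[symmetric]] by auto
    obtain B where B: "x ** B = mat 1" using SLR_inv[OF x] by auto
    have "(\<gamma> ** \<gamma>') ** x = \<gamma> ** (\<gamma>' ** x)" by (simp add: matrix_mul_assoc)
    also have "\<dots> = x" using g g' by metis
    finally have "(\<gamma> ** \<gamma>') ** x = x" .
    then have "(\<gamma> ** \<gamma>') ** x ** B = x ** B" by simp
    then have gg: "\<gamma> ** \<gamma>' = mat 1" using B by (simp add: matrix_mul_assoc[symmetric])
    let ?T = "SLR \<inter> {y. \<gamma>' ** y \<in> A}"
    have "open {y. \<gamma>' ** y \<in> A}"
      using open_vimage[OF A, of "\<lambda>y. \<gamma>' ** y"]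
      by (simp add: vimage_def continuous_intros)
    then have "openin (top_of_set SLR) ?T" by auto
    moreover have "x \<in> ?T" using x g' M1 by auto
    moreover have "?T \<subseteq> ?P"
    proof
      fix y assume y: "y \<in> ?T"
      have y1: "\<gamma>' ** y \<in> SLR" using SLZ_SLR_mult[OF g'(1)] y by auto
      have "y = \<gamma> ** (\<gamma>' ** y)" by (simp add: matrix_mul_assoc gg)
      then have "coset y \<subseteq> coset (\<gamma>' ** y)" using coset_sub[OF g(1)] by metis
      moreover have "coset (\<gamma>' ** y) \<subseteq> coset y" using coset_sub[OF g'(1)] .
      ultimately have "coset y = coset (\<gamma>' ** y)" by blast
      then show "y \<in> ?P" using y y1 by auto
    qed
    ultimately show "\<exists>T. openin (top_of_set SLR) T \<and> x \<in> T \<and> T \<subseteq> ?P" by blast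
  qed
qed



lemma dirichlet:
  fixes M :: "'d::finite matd1" and z :: "'d vecd1"
  assumes B: "B ** M = mat 1" and e: "\<epsilon> > 0"
  shows "\<exists>m k. (\<forall>i. m $ i \<in> \<int>) \<and> k \<ge> (1::nat) \<and> norm (m v* M - real k *\<^sub>R z) < \<epsilon>"
proof -
  define q where "q n = (real n *\<^sub>R z) v* B" for n :: nat
  define mm where "mm n = (\<chi> i. (of_int (floor (q n $ i)) :: real))" for n
  define e where "e n = mm n v* M - real n *\<^sub>R z" for n
  define K0 where "K0 = cbox (- 1) (1 :: 'd vecd1)"
  define K where "K = (\<lambda>y. y v* M) ` K0"
  have "continuous_on K0 (\<lambda>y. y v* M)" unfolding vector_matrix_mult_def
    by (intro continuous_intros)
  then have "compact K" unfolding K_def K0_def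
    by (intro compact_continuous_image compact_cbox) (simp add: K0_def)
  then have sK: "seq_compact K" by (rule compact_imp_seq_compact)
  have qM: "q n v* M = real n *\<^sub>R z" for n
    unfolding q_def by (simp add: vector_matrix_mul_assoc B)
  have eK: "e n \<in> K" for n
  proof -
    have "e n = (mm n - q n) v* M" unfolding e_def by (simp add: vector_matrix_mult_diff_distrib qM)
    moreover have "mm n - q n \<in> K0" unfolding K0_def mem_box_cart mm_def
    proof (intro allI conjI)
      fix i
      have "of_int (floor (q n $ i)) \<le> q n $ i" "q n $ i < of_int (floor (q n $ i)) + 1"
        by simp_all
      then show "(- 1) $ i \<le> ((\<chi> i. (of_int (floor (q n $ i)) :: real)) - q n) $ i"
        and "((\<chi> i. (of_int (floor (q n $ i)) :: real)) - q n) $ i \<le> 1 $ i" by (simp_all, linarith+)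
    qed
    ultimately show ?thesis unfolding K_def by blast
  qed
  obtain l r where r: "strict_mono (r :: nat \<Rightarrow> nat)" "(e \<circ> r) \<longlonglongrightarrow> l"
    using seq_compactE[OF sK, of e] eK by blast
  have "Cauchy (e \<circ> r)" using r(2) by (rule LIMSEQ_imp_Cauchy)
  then obtain N where N: "\<forall>a\<ge>N. \<forall>b\<ge>N. norm ((e \<circ> r) a - (e \<circ> r) b) < \<epsilon>"
    using CauchyD e by blast
  define a where "a = r N"
  define b where "b = r (Suc N)"
  have ab: "a < b" unfolding a_def b_def using r(1) by (simp add: strict_mono_def)
  have nb: "norm (e b - e a) < \<epsilon>" using N[rule_format, of "Suc N" N] by (simp add: a_def b_def)
  define m where "m = mm b - mm a"
  have mint: "\<forall>i. m $ i \<in> \<int>" unfolding m_def mm_def by simp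
  have "m v* M - real (b - a) *\<^sub>R z = e b - e a"
    unfolding m_def e_def using ab by (simp add: vector_matrix_mult_diff_distrib algebra_simps of_nat_diff)
  then show ?thesis using mint nb ab by (intro exI[of _ m] exI[of _ "b - a"]) auto
qed

lemma cone_open:
  fixes D :: "(real ^ 'd::finite) set"
  assumes D: "D \<subseteq> sphere 0 1"
    and int: "(top_of_set (sphere (0::real^'d) 1)) interior_of D \<noteq> {}"
  shows "\<exists>Oc x0. open Oc \<and> x0 \<in> Oc \<and> Oc \<subseteq> cone D \<and> (\<forall>y\<in>Oc. \<forall>s>0. s *\<^sub>R y \<in> Oc)"
proof -
  obtain x0 where x0: "x0 \<in> (top_of_set (sphere (0::real^'d) 1)) interior_of D" using int by blast
  then obtain U where U: "openin (top_of_set (sphere (0::real^'d) 1)) U" "x0 \<in> U" "U \<subseteq> D"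
    unfolding interior_of_def by blast
  then obtain T where T: "open T" "U = sphere 0 1 \<inter> T" by (meson openin_open)
  define Oc where "Oc = {v. v \<noteq> 0 \<and> v /\<^sub>R norm v \<in> T}"
  have "continuous_on (- {0}) (\<lambda>v::real^'d. v /\<^sub>R norm v)"
    by (intro continuous_intros) auto
  then have "open ((\<lambda>v::real^'d. v /\<^sub>R norm v) -` T \<inter> - {0})"
    using continuous_on_open_vimage[of "- {0}" "\<lambda>v::real^'d. v /\<^sub>R norm v"] T(1) by auto
  moreover have "Oc = (\<lambda>v::real^'d. v /\<^sub>R norm v) -` T \<inter> - {0}" unfolding Oc_def by auto
  ultimately have oO: "open Oc" by simp
  have x0n: "norm x0 = 1" using U T by auto
  have "x0 \<in> Oc" unfolding Oc_def using x0n U T by auto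
  moreover have "Oc \<subseteq> cone D"
  proof
    fix v assume v: "v \<in> Oc"
    then have "v /\<^sub>R norm v \<in> D" unfolding Oc_def using U T by auto
    moreover have "v = norm v *\<^sub>R (v /\<^sub>R norm v)" using v unfolding Oc_def by auto
    moreover have "norm v > 0" using v unfolding Oc_def by auto
    ultimately show "v \<in> cone D" unfolding cone_def by blast
  qed
  moreover have "\<forall>y\<in>Oc. \<forall>s>0. s *\<^sub>R y \<in> Oc"
  proof (intro ballI allI impI)
    fix y and s :: real assume y: "y \<in> Oc" and s: "s > 0"
    have "(s *\<^sub>R y) /\<^sub>R norm (s *\<^sub>R y) = y /\<^sub>R norm y" using s by simp
    then show "s *\<^sub>R y \<in> Oc" using y s unfolding Oc_def by (simp only: mem_Collect_eq) simp
  qed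
  ultimately show ?thesis using oO by blast
qed



lemma FD_le: "w \<in> QD D M t \<Longrightarrow> FD D M t \<le> norm (vcomp w)"
  unfolding FD_def by (rule cInf_lower) (auto intro: bdd_belowI[of _ 0])

lemma lattice_mem: "\<forall>i. m $ i \<in> \<int> \<Longrightarrow> m v* M \<in> lattice M"
  unfolding lattice_def by blast

lemma exist_Q:
  fixes Oc :: "(real^'d::finite) set"
  assumes oO: "open Oc" and x0: "x0 \<in> Oc" and sc: "\<forall>y\<in>Oc. \<forall>s>0. s *\<^sub>R y \<in> Oc"
    and M: "M \<in> SLR" and t: "0 < t" "t < 1"
  shows "\<exists>m. (\<forall>i. m $ i \<in> \<int>) \<and> - t < ucomp (m v* M) \<and> ucomp (m v* M) < 1 - t
             \<and> vcomp (m v* M) \<in> Oc"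
proof -
  obtain \<delta> where d: "\<delta> > 0" "ball x0 \<delta> \<subseteq> Oc" using oO x0 open_contains_ball by blast
  obtain B where B: "B ** M = mat 1" using SLR_inv[OF M] by blast
  define z :: "'d vecd1" where "z = (\<chi> i. case i of None \<Rightarrow> 0 | Some j \<Rightarrow> x0 $ j)"
  have uz: "ucomp z = 0" and vz: "vcomp z = x0" unfolding z_def ucomp_def vcomp_def by (auto simp: vec_eq_iff)
  define \<epsilon> where "\<epsilon> = min \<delta> (min t (1 - t))"
  have e: "\<epsilon> > 0" unfolding \<epsilon>_def using d t by auto
  obtain m k where mk: "\<forall>i. m $ i \<in> \<int>" "k \<ge> (1::nat)" "norm (m v* M - real k *\<^sub>R z) < \<epsilon>"
    using dirichlet[OF B e, of z] by blast
  define dd where "dd = m v* M - real k *\<^sub>R z"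
  have w: "m v* M = dd + real k *\<^sub>R z" unfolding dd_def by simp
  have "\<bar>ucomp dd\<bar> < \<epsilon>" using norm_ucomp[of dd] mk(3) unfolding dd_def by linarith
  then have u: "- t < ucomp (m v* M) \<and> ucomp (m v* M) < 1 - t"
    unfolding w using uz \<epsilon>_def by auto
  have kpos: "real k \<ge> 1" using mk(2) by simp
  have "norm ((1 / real k) *\<^sub>R vcomp dd) \<le> norm (vcomp dd)"
    using kpos mult_left_mono[OF kpos, of "norm (vcomp dd)"] by (simp add: divide_le_eq)
  also have "\<dots> \<le> norm dd" by (rule norm_vcomp)
  also have "\<dots> < \<delta>" using mk(3) unfolding dd_def \<epsilon>_def by simp
  finally have "x0 + (1 / real k) *\<^sub>R vcomp dd \<in> ball x0 \<delta>" by (simp add: dist_norm)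
  then have "x0 + (1 / real k) *\<^sub>R vcomp dd \<in> Oc" using d by blast
  then have "real k *\<^sub>R (x0 + (1 / real k) *\<^sub>R vcomp dd) \<in> Oc" using sc kpos by auto
  moreover have "real k *\<^sub>R (x0 + (1 / real k) *\<^sub>R vcomp dd) = vcomp (m v* M)"
    unfolding w using kpos vz by (simp add: algebra_simps)
  ultimately show ?thesis using u mk(1) by auto
qed



lemma open_quot_box:
  assumes "open A" "open B"
  shows "openin (prod_topology GammaG_top (top_of_set {0<..<1::real})) (coset ` (SLR \<inter> A) \<times> ({0<..<1} \<inter> B))"
  unfolding openin_prod_Times_iff using open_coset_image[OF assms(1)] assms(2) by auto

lemma FD_coset_eq: "coset M = coset M' \<Longrightarrow> FD D M t = FD D M' t"
  by (rule FD_lattice[OF lattice_coset])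

lemma local_bound:
  fixes D :: "(real ^ 'd::finite) set"
  assumes D: "D \<subseteq> sphere 0 1"
    and int: "(top_of_set (sphere (0::real^'d) 1)) interior_of D \<noteq> {}"
    and M: "M \<in> SLR" and t: "0 < t" "t < 1"
  shows "\<exists>A B K. open A \<and> open B \<and> M \<in> A \<and> t \<in> B \<and> (\<forall>M'\<in>SLR \<inter> A. \<forall>t'\<in>B. FD D M' t' < K)"
proof -
  obtain Oc x0 where Oc: "open Oc" "x0 \<in> Oc" "Oc \<subseteq> cone D" "\<forall>y\<in>Oc. \<forall>s>0. s *\<^sub>R y \<in> Oc"
    using cone_open[OF D int] by blast
  obtain m where m: "\<forall>i. m $ i \<in> \<int>" "- t < ucomp (m v* M)" "ucomp (m v* M) < 1 - t"
    "vcomp (m v* M) \<in> Oc"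
    using exist_Q[OF Oc(1,2,4) M t] by blast
  define K where "K = norm (vcomp (m v* M)) + 1"
  define S where "S = {p :: 'd matd1 \<times> real. - snd p < ucomp (m v* fst p) \<and> ucomp (m v* fst p) < 1 - snd p
      \<and> vcomp (m v* fst p) \<in> Oc \<and> norm (vcomp (m v* fst p)) < K}"
  have c1: "continuous_on UNIV (\<lambda>p::'d matd1 \<times> real. ucomp (m v* fst p))"
    and c2: "continuous_on UNIV (\<lambda>p::'d matd1 \<times> real. vcomp (m v* fst p))"
    by (intro continuous_intros)+
  have c3: "continuous_on UNIV (\<lambda>p::'d matd1 \<times> real. norm (vcomp (m v* fst p)))"
    by (intro continuous_intros)
  have o4: "open {p :: 'd matd1 \<times> real. vcomp (m v* fst p) \<in> Oc}"
    using open_vimage[OF Oc(1) c2] by (simp add: vimage_def)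
  have "open S" unfolding S_def
    by (intro open_Collect_conj open_Collect_less o4 c1 c2 c3 continuous_intros)
  moreover have "(M, t) \<in> S" unfolding S_def K_def using m by auto
  ultimately obtain A B where AB: "open A" "open B" "(M, t) \<in> A \<times> B" "A \<times> B \<subseteq> S"
    by (rule open_prod_elim)
  have "\<forall>M'\<in>SLR \<inter> A. \<forall>t'\<in>B. FD D M' t' < K"
  proof (intro ballI)
    fix M' t' assume M': "M' \<in> SLR \<inter> A" and t': "t' \<in> B"
    then have "(M', t') \<in> S" using AB by blast
    then have h: "- t' < ucomp (m v* M')" "ucomp (m v* M') < 1 - t'" "vcomp (m v* M') \<in> Oc"
      "norm (vcomp (m v* M')) < K" unfolding S_def by auto
    have "m v* M' \<in> QD D M' t'" unfolding QD_def using h Oc(3) lattice_mem[OF m(1)] by auto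
    then have "FD D M' t' \<le> norm (vcomp (m v* M'))" by (rule FD_le)
    then show "FD D M' t' < K" using h by linarith
  qed
  then show ?thesis using AB by blast
qed

lemma finite_bound:
  assumes "finite F" "\<forall>V\<in>F. \<exists>K::real. P V K" "\<And>V K K'. P V K \<Longrightarrow> K \<le> K' \<Longrightarrow> P V K'"
  shows "\<exists>K. \<forall>V\<in>F. P V K"
  using assms(1,2)
proof (induction F rule: finite_induct)
  case empty then show ?case by simp
next
  case (insert x F)
  then obtain K1 where K1: "\<forall>V\<in>F. P V K1" by auto
  obtain K2 where K2: "P x K2" using insert by auto
  have "\<forall>V\<in>insert x F. P V (max K1 K2)"
    using K1 K2 assms(3) by (metis insert_iff max.cobounded1 max.cobounded2)
  then show ?case by blast
qed

lemma part1:
  fixes D :: "(real ^ 'd::finite) set" and C :: "('d matd1 set \<times> real) set"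
  assumes D: "D \<subseteq> sphere 0 1"
    and int: "(top_of_set (sphere (0::real^'d) 1)) interior_of D \<noteq> {}"
    and C: "compactin (prod_topology GammaG_top (top_of_set {0<..<1})) C"
  shows "\<exists>K>0. \<forall>M t. M \<in> SLR \<and> (coset M, t) \<in> C \<longrightarrow> FD D M t < K"
proof -
  let ?X = "prod_topology GammaG_top (top_of_set {0<..<1::real})"
  define P where "P V K \<longleftrightarrow> (\<forall>M t. M \<in> SLR \<and> (coset M, t) \<in> V \<longrightarrow> FD D M t < K)" for V K
  define U where "U = {V. openin ?X V \<and> (\<exists>K. P V K)}"
  have CX: "C \<subseteq> topspace ?X" using C unfolding compactin_def by blast
  have "C \<subseteq> \<Union>U"
  proof
    fix p assume p: "p \<in> C"
    then have "p \<in> topspace GammaG_top \<times> {0<..<1}" using CX by auto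
    then obtain M t where Mt: "p = (coset M, t)" "M \<in> SLR" "0 < t" "t < 1"
      unfolding topspace_GammaG by auto
    obtain A B K where ABK: "open A" "open B" "M \<in> A" "t \<in> B" "\<forall>M'\<in>SLR \<inter> A. \<forall>t'\<in>B. FD D M' t' < K"
      using local_bound[OF D int Mt(2,3,4)] by blast
    define V where "V = coset ` (SLR \<inter> A) \<times> ({0<..<1} \<inter> B)"
    have "openin ?X V" unfolding V_def by (rule open_quot_box[OF ABK(1,2)])
    moreover have "P V K" unfolding P_def
    proof (intro allI impI)
      fix M' t' assume h: "M' \<in> SLR \<and> (coset M', t') \<in> V"
      then obtain M'' where "M'' \<in> SLR \<inter> A" "coset M' = coset M''" "t' \<in> B" unfolding V_def by auto
      then show "FD D M' t' < K" using ABK(5) FD_coset_eq by metis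
    qed
    moreover have "p \<in> V" unfolding V_def using Mt ABK by auto
    ultimately show "p \<in> \<Union>U" unfolding U_def by blast
  qed
  moreover have "\<forall>V\<in>U. openin ?X V" unfolding U_def by blast
  ultimately obtain F where F: "finite F" "F \<subseteq> U" "C \<subseteq> \<Union>F"
    using C unfolding compactin_def by meson
  have "\<forall>V\<in>F. \<exists>K. P V K" using F(2) unfolding U_def by blast
  moreover have "\<And>V K K'. P V K \<Longrightarrow> K \<le> K' \<Longrightarrow> P V K'" unfolding P_def by force
  ultimately obtain K where K: "\<forall>V\<in>F. P V K" using finite_bound[OF F(1)] by metis
  have "\<forall>M t. M \<in> SLR \<and> (coset M, t) \<in> C \<longrightarrow> FD D M t < max K 1"
  proof (intro allI impI)
    fix M t assume h: "M \<in> SLR \<and> (coset M, t) \<in> C"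
    then obtain V where "V \<in> F" "(coset M, t) \<in> V" using F(3) by blast
    then have "FD D M t < K" using K h unfolding P_def by blast
    then show "FD D M t < max K 1" by linarith
  qed
  then show ?thesis by (intro exI[of _ "max K 1"]) auto
qed



lemma finite_int_pts: "finite {m :: real^'n::finite. (\<forall>i. m $ i \<in> \<int>) \<and> norm m \<le> R}"
proof -
  define N where "N = ceiling R"
  let ?F = "Pi UNIV (\<lambda>_::'n. {-N..N})"
  have fin: "finite ?F" using finite_PiE[of "UNIV::'n set" "\<lambda>_. {-N..N}"] by (simp add: PiE_UNIV_domain)
  have "{m :: real^'n. (\<forall>i. m $ i \<in> \<int>) \<and> norm m \<le> R} \<subseteq> (\<lambda>f. \<chi> i. of_int (f i)) ` ?F"
  proof
    fix m :: "real^'n" assume m: "m \<in> {m. (\<forall>i. m $ i \<in> \<int>) \<and> norm m \<le> R}"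
    define f where "f i = floor (m $ i)" for i
    have e: "of_int (f i) = m $ i" for i using m unfolding f_def by (auto elim: Ints_cases)
    have "\<bar>m $ i\<bar> \<le> R" for i using component_le_norm_cart[of m i] m by auto
    then have "\<bar>of_int (f i)\<bar> \<le> R" for i using e by simp
    have "f i \<in> {-N..N}" for i
    proof -
      have h: "\<bar>real_of_int (f i)\<bar> \<le> R" by fact
      have "R \<le> of_int N" unfolding N_def by (rule le_of_int_ceiling)
      then have "\<bar>real_of_int (f i)\<bar> \<le> real_of_int N" using h by linarith
      then have "\<bar>f i\<bar> \<le> N" by linarith
      then show ?thesis by auto
    qed
    then have "f \<in> ?F" by auto
    moreover have "m = (\<chi> i. of_int (f i))" using e by (simp add: vec_eq_iff)
    ultimately show "m \<in> (\<lambda>f. \<chi> i. of_int (f i)) ` ?F" by blast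
  qed
  then show ?thesis using fin finite_subset by blast
qed

lemma vm_bound:
  fixes x :: "real^'n::finite" and A :: "real^'m::finite^'n"
  shows "norm (x v* A) \<le> real CARD('m) * real CARD('n) * norm x * norm A"
proof -
  have "norm (x v* A) \<le> (\<Sum>j\<in>UNIV. \<bar>(x v* A) $ j\<bar>)" by (rule norm_le_l1_cart)
  also have "\<dots> \<le> (\<Sum>j\<in>(UNIV::'m set). real CARD('n) * norm x * norm A)"
  proof (rule sum_mono)
    fix j :: 'm
    have "\<bar>(x v* A) $ j\<bar> = \<bar>\<Sum>i\<in>UNIV. x $ i * A $ i $ j\<bar>" by (simp add: vector_matrix_mult_def)
    also have "\<dots> \<le> (\<Sum>i\<in>UNIV. \<bar>x $ i * A $ i $ j\<bar>)" by (rule sum_abs)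
    also have "\<dots> \<le> (\<Sum>i\<in>(UNIV::'n set). norm x * norm A)"
    proof (rule sum_mono)
      fix i
      have a: "\<bar>x $ i\<bar> \<le> norm x" by (rule component_le_norm_cart)
      have "\<bar>A $ i $ j\<bar> \<le> norm (A $ i)" by (rule component_le_norm_cart)
      also have "\<dots> \<le> norm A" by (rule Finite_Cartesian_Product.norm_nth_le)
      finally have b: "\<bar>A $ i $ j\<bar> \<le> norm A" .
      show "\<bar>x $ i * A $ i $ j\<bar> \<le> norm x * norm A" unfolding abs_mult
        by (rule mult_mono[OF a b]) auto
    qed
    also have "\<dots> = real CARD('n) * norm x * norm A" by simp
    finally show "\<bar>(x v* A) $ j\<bar> \<le> real CARD('n) * norm x * norm A" .
  qed
  also have "\<dots> = real CARD('m) * real CARD('n) * norm x * norm A" by simp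
  finally show ?thesis .
qed



lemma cone_nz: "D \<subseteq> sphere 0 1 \<Longrightarrow> v \<in> cone D \<Longrightarrow> v \<noteq> 0"
  unfolding cone_def by auto

lemma trunc_nz: "D \<subseteq> sphere 0 1 \<Longrightarrow> (0::real^'d::finite) \<notin> trunc_cone r D"
  unfolding trunc_cone_def by auto

lemma QD_region:
  assumes D: "D \<subseteq> sphere 0 1" and w: "w \<in> QD D M t" and r: "norm (vcomp w) \<le> r"
  shows "w \<in> region D t r"
proof -
  from w obtain s x where sx: "vcomp w = s *\<^sub>R x" "s > 0" "x \<in> D"
    unfolding QD_def cone_def by auto
  have "norm x = 1" using sx D by auto
  then have "norm (vcomp w) = s" using sx by simp
  then have "vcomp w \<in> trunc_cone r D" unfolding trunc_cone_def using sx r by auto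
  then show ?thesis using w unfolding QD_def region_def by auto
qed

lemma region_QD: "w \<in> lattice M \<Longrightarrow> w \<in> region D t r \<Longrightarrow> w \<in> QD D M t"
  unfolding region_def QD_def trunc_cone_def cone_def by auto

lemma u_e1: "ucomp (axis None 1 :: 'd::finite vecd1) = 1"
  and v_e1: "vcomp (axis None 1 :: 'd::finite vecd1) = 0"
  by (simp_all add: ucomp_def vcomp_def axis_def vec_eq_iff)

lemma region_shift:
  "(w :: 'd::finite vecd1) \<in> region D t r \<longleftrightarrow> w + (t - t0) *\<^sub>R axis None 1 \<in> region D t0 r"
  unfolding region_def by (auto simp: u_e1 v_e1)



lemma core:
  fixes D :: "(real ^ 'd::finite) set"
  assumes D: "D \<subseteq> sphere 0 1"
    and int: "(top_of_set (sphere (0::real^'d) 1)) interior_of D \<noteq> {}"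
    and kap: "FD D M0 t0 < \<kappa>"
    and front: "(lattice M0 - {0}) \<inter> frontier (region D t0 \<kappa>) = {}"
    and M0: "M0 \<in> SLR" and t0: "0 < t0" "t0 < 1" and eps: "\<epsilon> > 0"
  shows "\<exists>A B. open A \<and> open B \<and> M0 \<in> A \<and> t0 \<in> B \<and>
     (\<forall>M'\<in>SLR \<inter> A. \<forall>t'\<in>B \<inter> {0<..<1}. \<bar>FD D M' t' - FD D M0 t0\<bar> < \<epsilon>)"
proof -
  define F0 where "F0 = FD D M0 t0"
  define ee where "ee = min (\<epsilon>/2) ((\<kappa> - F0)/2)"
  have eepos: "ee > 0" unfolding ee_def F0_def using eps kap by auto
  have h1: "ee \<le> (\<kappa> - F0)/2" unfolding ee_def by (rule min.cobounded2)
  have h2: "F0 < \<kappa>" using kap unfolding F0_def .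
  have eek: "F0 + ee \<le> \<kappa>" using h1 h2 by argo
  have eee: "ee \<le> \<epsilon>/2" unfolding ee_def by (rule min.cobounded1)
  define e1 :: "'d vecd1" where "e1 = axis None 1"
  define R0 where "R0 = region D t0 \<kappa>"
  define \<Phi> where "\<Phi> m p = m v* fst p + (snd p - t0) *\<^sub>R e1" for m :: "'d vecd1" and p :: "'d matd1 \<times> real"
  have cont\<Phi>: "continuous_on UNIV (\<Phi> m)" for m
    unfolding \<Phi>_def by (intro continuous_intros)
  have shift\<Phi>: "m v* M' \<in> region D t' \<kappa> \<longleftrightarrow> \<Phi> m (M', t') \<in> R0" for m M' t'
    unfolding \<Phi>_def R0_def e1_def fst_conv snd_conv by (rule region_shift)
  have \<Phi>0: "\<Phi> m (M0, t0) = m v* M0" for m unfolding \<Phi>_def by simp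
  define N0 where "N0 = {norm (vcomp w) | w. w \<in> QD D M0 t0}"
  have F0N: "F0 = Inf N0" unfolding F0_def FD_def N0_def ..
  obtain Oc x0 where Oc: "open Oc" "x0 \<in> Oc" "Oc \<subseteq> cone D" "\<forall>y\<in>Oc. \<forall>s>0. s *\<^sub>R y \<in> Oc"
    using cone_open[OF D int] by blast
  obtain m0 where m0: "\<forall>i. m0 $ i \<in> \<int>" "- t0 < ucomp (m0 v* M0)" "ucomp (m0 v* M0) < 1 - t0"
    "vcomp (m0 v* M0) \<in> Oc"
    using exist_Q[OF Oc(1,2,4) M0 t0] by blast
  have "m0 v* M0 \<in> QD D M0 t0" unfolding QD_def using m0 Oc(3) lattice_mem[OF m0(1)] by auto
  then have N0ne: "N0 \<noteq> {}" unfolding N0_def by blast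
  have "Inf N0 < F0 + ee" using F0N eepos by simp
  then obtain x where "x \<in> N0" "x < F0 + ee" using cInf_lessD[OF N0ne] by blast
  then obtain w1 where w1: "w1 \<in> QD D M0 t0" "norm (vcomp w1) < F0 + ee" unfolding N0_def by blast
  then obtain m1 where m1: "\<forall>i. m1 $ i \<in> \<int>" "w1 = m1 v* M0" unfolding QD_def lattice_def by blast
  have w1R: "w1 \<in> R0" unfolding R0_def using QD_region[OF D w1(1)] w1(2) eek by simp
  have "vcomp w1 \<noteq> 0" using w1(1) cone_nz[OF D] unfolding QD_def by auto
  then have "w1 \<noteq> 0" by auto
  moreover have "w1 \<in> lattice M0" using w1(1) unfolding QD_def by auto
  ultimately have "w1 \<notin> frontier R0" using front unfolding R0_def by blast
  then have w1int: "w1 \<in> interior R0" using w1R closure_subset unfolding frontier_def by blast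
  define Oup where "Oup = {p. \<Phi> m1 p \<in> interior R0} \<inter> {p. norm (vcomp (m1 v* fst p)) < F0 + ee}"
  have "open {p. \<Phi> m1 p \<in> interior R0}"
    using open_vimage[OF open_interior cont\<Phi>] by (simp add: vimage_def)
  moreover have "open {p :: 'd matd1 \<times> real. norm (vcomp (m1 v* fst p)) < F0 + ee}"
    by (intro open_Collect_less continuous_intros)
  ultimately have oOup: "open Oup" unfolding Oup_def by auto
  have inOup: "(M0, t0) \<in> Oup" unfolding Oup_def using w1int w1(2) m1(2) \<Phi>0 by auto
  obtain Binv where Binv: "M0 ** Binv = mat 1" using SLR_inv[OF M0] by blast
  define c where "c = real CARD('d option) * real CARD('d option)"
  have a0: "1 \<le> CARD('d option)" using finite_UNIV_card_ge_0[where 'a="'d option"] by simp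
  have "real 1 \<le> real CARD('d option)" using a0 by (rule of_nat_mono)
  then have a1: "(1::real) \<le> real CARD('d option)" by simp
  have c1: "c \<ge> 1" unfolding c_def using mult_mono[OF a1 a1] by simp
  define Cn where "Cn = c * norm Binv + 1"
  have Cn1: "Cn \<ge> 1" unfolding Cn_def using c1 by simp
  have mb0: "norm m \<le> Cn * norm (m v* M0)" for m :: "'d vecd1"
  proof -
    have "m = (m v* M0) v* Binv" by (simp add: vector_matrix_mul_assoc Binv)
    then have "norm m \<le> c * norm (m v* M0) * norm Binv" using vm_bound[of "m v* M0" Binv]
      unfolding c_def by (metis mult.assoc)
    also have "\<dots> \<le> Cn * norm (m v* M0)" unfolding Cn_def by (simp add: algebra_simps)
    finally show ?thesis .
  qed
  define \<delta> where "\<delta> = 1 / (2 * c * Cn)"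
  have \<delta>pos: "\<delta> > 0" unfolding \<delta>_def using c1 Cn1 by simp
  have mb: "norm m \<le> 2 * Cn * norm (m v* M')" if "norm (M' - M0) < \<delta>" for m :: "'d vecd1" and M'
  proof -
    have "norm (m v* (M' - M0)) \<le> c * norm m * norm (M' - M0)"
      using vm_bound[of m "M' - M0"] unfolding c_def by (simp add: mult.assoc)
    also have "\<dots> \<le> c * norm m * \<delta>" using that c1 by (intro mult_left_mono) auto
    also have "\<dots> = norm m / (2 * Cn)" unfolding \<delta>_def using c1 by (simp add: field_simps)
    finally have h1: "norm (m v* (M' - M0)) \<le> norm m / (2 * Cn)" .
    have "m v* M0 = m v* M' - m v* (M' - M0)" by (simp add: vector_matrix_mult_diff_rdistrib)
    then have "norm (m v* M0) \<le> norm (m v* M') + norm (m v* (M' - M0))"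
      by (metis norm_triangle_ineq4)
    then have "norm (m v* M0) \<le> norm (m v* M') + norm m / (2 * Cn)" using h1 by linarith
    then have "Cn * norm (m v* M0) \<le> Cn * (norm (m v* M') + norm m / (2 * Cn))"
      using Cn1 by (intro mult_left_mono) auto
    also have "\<dots> = Cn * norm (m v* M') + norm m / 2" using Cn1 by (simp add: field_simps)
    finally have "Cn * norm (m v* M0) \<le> Cn * norm (m v* M') + norm m / 2" .
    then show ?thesis using mb0[of m] by linarith
  qed
  define Rb where "Rb = 2 * Cn * (1 + \<kappa>)"
  define S where "S = {m :: 'd vecd1. (\<forall>i. m $ i \<in> \<int>) \<and> norm m \<le> Rb}"
  have finS: "finite S" unfolding S_def by (rule finite_int_pts)
  define bad where "bad m p \<longleftrightarrow> m v* fst p \<in> region D (snd p) \<kappa> \<and> norm (vcomp (m v* fst p)) < F0 - ee"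
    for m :: "'d vecd1" and p :: "'d matd1 \<times> real"
  have good: "\<exists>Ob1. open Ob1 \<and> (M0, t0) \<in> Ob1 \<and> (\<forall>p\<in>Ob1. \<not> bad m p)" if mS: "m \<in> S" for m
  proof (cases "m v* M0 \<in> QD D M0 t0")
    case True
    then have "F0 \<le> norm (vcomp (m v* M0))" unfolding F0_def by (rule FD_le)
    moreover have "open {p :: 'd matd1 \<times> real. F0 - ee < norm (vcomp (m v* fst p))}"
      by (intro open_Collect_less continuous_intros)
    ultimately show ?thesis using eepos unfolding bad_def
      by (intro exI[of _ "{p :: 'd matd1 \<times> real. F0 - ee < norm (vcomp (m v* fst p))}"]) auto
  next
    case False
    show ?thesis
    proof (cases "m = 0")
      case True
      then show ?thesis unfolding bad_def region_def using trunc_nz[OF D] by (intro exI[of _ UNIV]) auto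
    next
      case False2: False
      have "m v* M0 \<noteq> 0" using mb0[of m] False2 by auto
      moreover have lat: "m v* M0 \<in> lattice M0" using mS unfolding S_def by (intro lattice_mem) auto
      ultimately have nf: "m v* M0 \<notin> frontier R0" using front unfolding R0_def by blast
      have "m v* M0 \<notin> R0" using region_QD[OF lat] False unfolding R0_def by blast
      then have "m v* M0 \<notin> interior R0" using interior_subset by blast
      then have ncl: "m v* M0 \<notin> closure R0" using nf unfolding frontier_def by blast
      define Ob1 where "Ob1 = {p. \<Phi> m p \<in> - closure R0}"
      have "open Ob1" unfolding Ob1_def
        using open_vimage[OF _ cont\<Phi>, of "- closure R0" m] by (simp add: vimage_def open_Compl)
      moreover have "(M0, t0) \<in> Ob1" unfolding Ob1_def using ncl \<Phi>0 by simp
      moreover have "\<forall>p\<in>Ob1. \<not> bad m p"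
      proof
        fix p assume "p \<in> Ob1"
        then have "\<Phi> m p \<notin> R0" unfolding Ob1_def using closure_subset by blast
        then have "m v* fst p \<notin> region D (snd p) \<kappa>" using shift\<Phi>[of m "fst p" "snd p"] by simp
        then show "\<not> bad m p" unfolding bad_def by simp
      qed
      ultimately show ?thesis by blast
    qed
  qed
  then have "\<forall>m\<in>S. \<exists>Ob1. open Ob1 \<and> (M0, t0) \<in> Ob1 \<and> (\<forall>p\<in>Ob1. \<not> bad m p)" by blast
  then have "\<exists>Of. \<forall>m\<in>S. open (Of m) \<and> (M0, t0) \<in> Of m \<and> (\<forall>p\<in>Of m. \<not> bad m p)"
    by (rule bchoice)
  then obtain Of where Of: "\<forall>m\<in>S. open (Of m) \<and> (M0, t0) \<in> Of m \<and> (\<forall>p\<in>Of m. \<not> bad m p)"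
    by blast
  define Olow where "Olow = (\<Inter>m\<in>S. Of m)"
  have oOlow: "open Olow" unfolding Olow_def using Of finS by (intro open_INT) auto
  define Ob where "Ob = {p :: 'd matd1 \<times> real. norm (fst p - M0) < \<delta>}"
  have oOb: "open Ob" unfolding Ob_def by (intro open_Collect_less continuous_intros)
  define Ot where "Ot = Oup \<inter> Olow \<inter> Ob"
  have "open Ot" unfolding Ot_def using oOup oOlow oOb by auto
  moreover have "(M0, t0) \<in> Ot" unfolding Ot_def Olow_def Ob_def using inOup Of \<delta>pos by auto
  ultimately obtain A B where AB: "open A" "open B" "(M0, t0) \<in> A \<times> B" "A \<times> B \<subseteq> Ot"
    by (rule open_prod_elim)
  have "\<forall>M'\<in>SLR \<inter> A. \<forall>t'\<in>B \<inter> {0<..<1}. \<bar>FD D M' t' - F0\<bar> < \<epsilon>"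
  proof (intro ballI)
    fix M' t' assume M': "M' \<in> SLR \<inter> A" and t': "t' \<in> B \<inter> {0<..<1}"
    have pOt: "(M', t') \<in> Ot" using AB M' t' by blast
    have "\<Phi> m1 (M', t') \<in> R0" using pOt interior_subset unfolding Ot_def Oup_def by auto
    then have "m1 v* M' \<in> region D t' \<kappa>" using shift\<Phi> by blast
    then have q1: "m1 v* M' \<in> QD D M' t'" using region_QD lattice_mem[OF m1(1)] by blast
    then have up: "FD D M' t' < F0 + ee" using FD_le[OF q1] pOt unfolding Ot_def Oup_def by auto
    have low: "F0 - ee \<le> FD D M' t'"
    proof (rule ccontr)
      assume "\<not> F0 - ee \<le> FD D M' t'"
      then have lt: "Inf {norm (vcomp w) | w. w \<in> QD D M' t'} < F0 - ee" unfolding FD_def by simp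
      have ne: "{norm (vcomp w) | w. w \<in> QD D M' t'} \<noteq> {}" using q1 by blast
      obtain y where "y \<in> {norm (vcomp w) | w. w \<in> QD D M' t'}" "y < F0 - ee"
        using cInf_lessD[OF ne lt] by blast
      then obtain w where w: "w \<in> QD D M' t'" "norm (vcomp w) < F0 - ee" by blast
      then obtain m where m: "\<forall>i. m $ i \<in> \<int>" "w = m v* M'" unfolding QD_def lattice_def by blast
      have wR: "w \<in> region D t' \<kappa>" using QD_region[OF D w(1)] w(2) eek eepos by simp
      have "\<bar>ucomp w\<bar> < 1" using w(1) t' unfolding QD_def by auto
      then have "norm w < 1 + \<kappa>" using norm_split_le[of w] w(2) eek eepos by linarith
      moreover have "norm (M' - M0) < \<delta>" using pOt unfolding Ot_def Ob_def by auto
      ultimately have nw: "norm w \<le> 1 + \<kappa>" and "norm m \<le> 2 * Cn * norm w"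
        using mb[of M' m] m(2) by auto
      then have "2 * Cn * norm w \<le> 2 * Cn * (1 + \<kappa>)" using Cn1 by (intro mult_left_mono) auto
      then have "norm m \<le> Rb" unfolding Rb_def using \<open>norm m \<le> 2 * Cn * norm w\<close> by linarith
      then have "m \<in> S" unfolding S_def using m(1) by blast
      then have "(M', t') \<in> Of m" using pOt unfolding Ot_def Olow_def by blast
      then have "\<not> bad m (M', t')" using Of \<open>m \<in> S\<close> by blast
      moreover have "bad m (M', t')" unfolding bad_def using wR w(2) m(2) by simp
      ultimately show False by contradiction
    qed
    show "\<bar>FD D M' t' - F0\<bar> < \<epsilon>" using up low eee eps by linarith
  qed
  then show ?thesis using AB unfolding F0_def by blast
qed


theorem proposition7p1:
  fixes D :: "(real ^ 'd::finite) set"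
    and C :: "('d matd1 set \<times> real) set"
  assumes "CARD('d) \<ge> 2"
    and "D \<subseteq> sphere 0 1"
    and "(top_of_set (sphere (0::real^'d) 1)) interior_of D \<noteq> {}"
    and "compactin (prod_topology GammaG_top (top_of_set {0<..<1})) C"
  shows "\<exists>\<kappa>>0.
           (\<forall>M t. M \<in> SLR \<and> (coset M, t) \<in> C \<longrightarrow> FD D M t < \<kappa>) \<and>
           (\<forall>M t. M \<in> SLR \<and> (coset M, t) \<in> C \<and>
                  (lattice M - {0}) \<inter> frontier (region D t \<kappa>) = {} \<longrightarrow>
                  topcontinuous_at (prod_topology GammaG_top (top_of_set {0<..<1}))
                                   euclideanreal (FDq D) (coset M, t))"
proof -
  note D = assms(2) and int = assms(3) and C = assms(4)
  let ?X = "prod_topology GammaG_top (top_of_set {0<..<1::real})"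
  obtain \<kappa> where kpos: "\<kappa> > 0" and kb: "\<forall>M t. M \<in> SLR \<and> (coset M, t) \<in> C \<longrightarrow> FD D M t < \<kappa>"
    using part1[OF D int C] by blast
  have CX: "C \<subseteq> topspace ?X" using C unfolding compactin_def by blast
  have "\<forall>M t. M \<in> SLR \<and> (coset M, t) \<in> C \<and>
                  (lattice M - {0}) \<inter> frontier (region D t \<kappa>) = {} \<longrightarrow>
                  topcontinuous_at ?X euclideanreal (FDq D) (coset M, t)"
  proof (intro allI impI)
    fix M t assume h: "M \<in> SLR \<and> (coset M, t) \<in> C \<and> (lattice M - {0}) \<inter> frontier (region D t \<kappa>) = {}"
    then have M: "M \<in> SLR" and fr: "(lattice M - {0}) \<inter> frontier (region D t \<kappa>) = {}" by auto
    have "(coset M, t) \<in> topspace ?X" using h CX by blast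
    then have t: "0 < t" "t < 1" by auto
    have kap: "FD D M t < \<kappa>" using kb h by blast
    show "topcontinuous_at ?X euclideanreal (FDq D) (coset M, t)"
      unfolding topcontinuous_at_def
    proof (intro conjI allI impI)
      show "(coset M, t) \<in> topspace ?X" using M t by (simp add: topspace_GammaG)
      show "FDq D \<in> topspace ?X \<rightarrow> topspace euclideanreal" by simp
      fix V assume V: "openin euclideanreal V \<and> FDq D (coset M, t) \<in> V"
      then have oV: "open V" and inV: "FD D M t \<in> V" using FDq_coset[OF M] by auto
      obtain \<epsilon> where eps: "\<epsilon> > 0" "ball (FD D M t) \<epsilon> \<subseteq> V"
        using open_contains_ball oV inV by blast
      obtain A B where AB: "open A" "open B" "M \<in> A" "t \<in> B"
        "\<forall>M'\<in>SLR \<inter> A. \<forall>t'\<in>B \<inter> {0<..<1}. \<bar>FD D M' t' - FD D M t\<bar> < \<epsilon>"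
        using core[OF D int kap fr M t eps(1)] by blast
      define U where "U = coset ` (SLR \<inter> A) \<times> ({0<..<1} \<inter> B)"
      have "openin ?X U" unfolding U_def by (rule open_quot_box[OF AB(1,2)])
      moreover have "(coset M, t) \<in> U" unfolding U_def using M AB t by auto
      moreover have "\<forall>y\<in>U. FDq D y \<in> V"
      proof
        fix y assume "y \<in> U"
        then obtain M1 t1 where y: "y = (coset M1, t1)" "M1 \<in> SLR \<inter> A" "t1 \<in> B \<inter> {0<..<1}"
          unfolding U_def by auto
        have "FDq D y = FD D M1 t1" using y FDq_coset by auto
        moreover have "\<bar>FD D M1 t1 - FD D M t\<bar> < \<epsilon>" using AB(5) y by blast
        ultimately have "FDq D y \<in> ball (FD D M t) \<epsilon>" by (simp add: dist_real_def abs_minus_commute)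
        then show "FDq D y \<in> V" using eps by blast
      qed
      ultimately show "\<exists>U. openin ?X U \<and> (coset M, t) \<in> U \<and> (\<forall>y\<in>U. FDq D y \<in> V)" by blast
    qed
  qed
  then show ?thesis using kpos kb by blast
qed

end
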